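(* If $6$ divides $n$, then $IK_n$ is not a $G$-graph.
   Context: $K_n$ is the complete simple graph on $n$ vertices and $IK_n$ its incidence graph (the simple graph whose vertices are the vertices and edges of $K_n$, each edge adjacent exactly to its two end-points). For a group $G$ and a multiset $S$ of elements of $G$, $\Phi(G,S)$ is the multigraph whose vertex set is the union over the members $s$ of $S$ (with multiplicity) of the right cosets $\langle s\rangle x$, $x\in G$, with one edge labeled $g$ between $\langle s\rangle x$ and $\langle t\rangle y$ ($s,t$ distinct members of $S$) for each $g\in\langle s\rangle x\cap\langle t\rangle y$, and no other edges; a $G$-graph is a multigraph isomorphic (ignoring labels) to some $\Phi(G,S)$. *)

theory Defs
  imports "HOL-Algebra.Algebra" "HOL-Library.Equipollence"
begin

text \<open>Multigraphs are represented by a vertex set V and, for every pair of vertices,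
  the set of (labels of) edges joining them.\<close>

definition multigraph_iso ::
  "'a set \<Rightarrow> ('a \<Rightarrow> 'a \<Rightarrow> 'e set) \<Rightarrow> 'b set \<Rightarrow> ('b \<Rightarrow> 'b \<Rightarrow> 'f set) \<Rightarrow> bool" where
  "multigraph_iso V1 E1 V2 E2 \<longleftrightarrow>
     (\<exists>f. bij_betw f V1 V2 \<and> (\<forall>u\<in>V1. \<forall>v\<in>V1. E1 u v \<approx> E2 (f u) (f v)))"

text \<open>The multiset S is given as a list of group elements
  (a list determines the multiset, its entries with multiplicity are indexed by
  positions i < length S). A vertex is a pair (i, C) with C a right coset of the
  cyclic subgroup generated by S!i; distinct members of S give disjoint vertex
  classes.\<close>

definition phi_vertices :: "('g, 'm) monoid_scheme \<Rightarrow> 'g list \<Rightarrow> (nat \<times> 'g set) set" where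
  "phi_vertices G S =
     {(i, C). i < length S \<and> C \<in> rcosets\<^bsub>G\<^esub> (generate G {S ! i})}"

definition phi_edges :: "nat \<times> 'g set \<Rightarrow> nat \<times> 'g set \<Rightarrow> 'g set" where
  "phi_edges x y = (if fst x \<noteq> fst y then snd x \<inter> snd y else {})"

definition is_G_graph :: "'a set \<Rightarrow> ('a \<Rightarrow> 'a \<Rightarrow> 'e set) \<Rightarrow> ('g, 'm) monoid_scheme \<Rightarrow> bool" where
  "is_G_graph V E G \<longleftrightarrow>
     (\<exists>S. set S \<subseteq> carrier G \<and> multigraph_iso V E (phi_vertices G S) phi_edges)"

text \<open>The incidence graph IK_n of K_n on vertex set {0..<n}: vertices Inl v (vertices of K_n)
  and Inr e (edges of K_n, i.e. 2-subsets); an edge e is adjacent exactly to its end-points.\<close>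

definition IK_vertices :: "nat \<Rightarrow> (nat + nat set) set" where
  "IK_vertices n = Inl ` {..<n} \<union> Inr ` {e. e \<subseteq> {..<n} \<and> card e = 2}"

definition IK_adj :: "nat + nat set \<Rightarrow> nat + nat set \<Rightarrow> bool" where
  "IK_adj x y = (case (x, y) of
       (Inl v, Inr e) \<Rightarrow> v \<in> e
     | (Inr e, Inl v) \<Rightarrow> v \<in> e
     | _ \<Rightarrow> False)"

definition IK_edges :: "nat + nat set \<Rightarrow> nat + nat set \<Rightarrow> (nat + nat set) set set" where
  "IK_edges x y = (if IK_adj x y then {{x, y}} else {})"

end

theory Submission
  imports Defs "HOL-Algebra.Sylow"
begin


lemma (in group) two_subgroup:
  assumes "t \<in> carrier G" "t \<otimes> t = \<one>"
  shows "subgroup {\<one>, t} G"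
proof (rule subgroupI)
  have it: "inv t = t" using assms inv_equality by blast
  show "{\<one>, t} \<subseteq> carrier G" using assms by auto
  show "{\<one>, t} \<noteq> {}" by auto
  show "\<And>a. a \<in> {\<one>, t} \<Longrightarrow> inv a \<in> {\<one>, t}" using it by auto
  show "\<And>a b. a \<in> {\<one>, t} \<Longrightarrow> b \<in> {\<one>, t} \<Longrightarrow> a \<otimes> b \<in> {\<one>, t}"
    using assms by auto
qed

lemma (in group) sub_dvd:
  assumes "subgroup I G" "subgroup J G" "I \<subseteq> J"
  shows "card I dvd card J"
proof -
  have gJ: "group (G\<lparr>carrier := J\<rparr>)" using assms(2) subgroup_imp_group by blast
  have "subgroup I (G\<lparr>carrier := J\<rparr>)" using assms subgroup_incl by blast
  then have "card (rcosets\<^bsub>G\<lparr>carrier := J\<rparr>\<^esub> I) * card I = order (G\<lparr>carrier := J\<rparr>)"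
    using group.lagrange[OF gJ] by blast
  then show ?thesis unfolding order_def by (metis dvd_triv_right partial_object.select_convs(1) partial_object.surjective partial_object.update_convs(1))
qed

lemma (in group) cancel1: "x \<in> carrier G \<Longrightarrow> y \<in> carrier G \<Longrightarrow> x \<otimes> (inv x \<otimes> y) = y"
  by (simp add: m_assoc[symmetric])
lemma (in group) cancel2: "x \<in> carrier G \<Longrightarrow> y \<in> carrier G \<Longrightarrow> inv x \<otimes> (x \<otimes> y) = y"
  by (simp add: m_assoc[symmetric])
lemma (in group) cancel3: "x \<in> carrier G \<Longrightarrow> y \<in> carrier G \<Longrightarrow> x \<otimes> x = \<one> \<Longrightarrow> x \<otimes> (x \<otimes> y) = y"
  by (simp add: m_assoc[symmetric])

lemma core:
  fixes G (structure) and H and b and n :: nat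
  assumes grp: "group G" and HG: "subgroup H G"
    and b: "b \<in> carrier G" "b \<noteq> \<one>" "b \<otimes> b = \<one>" "b \<notin> H"
    and cardO: "card (rcosets H) = n" and cardH: "card H = n - 1"
    and fin: "finite (carrier G)" and n6: "6 dvd n" "n > 0"
    and SW: "\<And>P Q. P \<in> rcosets H \<Longrightarrow> Q \<in> rcosets H \<Longrightarrow> P \<noteq> Q \<Longrightarrow>
          \<exists>z\<in>carrier G. (H #> z = P \<and> H #> (b \<otimes> z) = Q) \<or> (H #> z = Q \<and> H #> (b \<otimes> z) = P)"
    and INJ: "\<And>z w. z \<in> carrier G \<Longrightarrow> w \<in> carrier G \<Longrightarrow> H #> z = H #> w \<Longrightarrow>
          H #> (b \<otimes> z) = H #> (b \<otimes> w) \<Longrightarrow> w = z \<or> w = b \<otimes> z"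
  shows False
proof -
  interpret group G by (rule grp)
  interpret subgroup H G by (rule HG)
  have nge: "n \<ge> 6" using n6 by (auto dest: dvd_imp_le)
  have ordG: "order G = n * (n - 1)" using lagrange[OF HG] cardO cardH by simp
  have Hsub: "H \<subseteq> carrier G" by (rule subset)
  have Psub: "P \<subseteq> carrier G" if "P \<in> rcosets H" for P
    using rcosets_carrier[OF grp that] .
  define St where "St P = {x \<in> carrier G. P #> x = P}" for P
  have St_sub: "subgroup (St P) G" if "P \<in> rcosets H" for P
  proof (rule subgroupI)
    have PS: "P \<subseteq> carrier G" using Psub that .
    show "St P \<subseteq> carrier G" unfolding St_def by auto
    show "St P \<noteq> {}" using PS unfolding St_def by (auto intro!: exI[of _ \<one>])
    show "inv a \<in> St P" if "a \<in> St P" for a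
    proof -
      have a: "a \<in> carrier G" "P #> a = P" using that unfolding St_def by auto
      have "P #> inv a = (P #> a) #> inv a" using a by simp
      also have "\<dots> = P #> (a \<otimes> inv a)" by (rule coset_mult_assoc) (use PS a in auto)
      also have "\<dots> = P" using a PS by simp
      finally show ?thesis using a unfolding St_def by simp
    qed
    show "a \<otimes> c \<in> St P" if "a \<in> St P" "c \<in> St P" for a c
    proof -
      have a: "a \<in> carrier G" "P #> a = P" "c \<in> carrier G" "P #> c = P"
        using that unfolding St_def by auto
      have "P #> (a \<otimes> c) = (P #> a) #> c" by (rule coset_mult_assoc[symmetric]) (use PS a in auto)
      also have "\<dots> = P" using a by simp
      finally show ?thesis using a unfolding St_def by simp
    qed
  qed
  have St_card: "card (St P) = n - 1" if PH: "P \<in> rcosets H" for P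
  proof -
    obtain y where y: "y \<in> carrier G" "P = H #> y" using PH by (auto simp: RCOSETS_def)
    let ?f = "\<lambda>h. inv y \<otimes> h \<otimes> y"
    have "?f ` H = St P"
    proof
      show "?f ` H \<subseteq> St P"
      proof
        fix x assume "x \<in> ?f ` H"
        then obtain h where h: "h \<in> H" "x = ?f h" by auto
        have hc: "h \<in> carrier G" using h Hsub by auto
        have xc: "x \<in> carrier G" using h hc y by simp
        have "P #> x = H #> (y \<otimes> x)" using y xc coset_mult_assoc Hsub by simp
        also have "y \<otimes> x = h \<otimes> y" using h hc y by (simp add: m_assoc[symmetric])
        also have "H #> (h \<otimes> y) = (H #> h) #> y" using coset_mult_assoc Hsub hc y by simp
        also have "\<dots> = P" using coset_join2[OF hc HG h(1)] y by simp
        finally show "x \<in> St P" using xc unfolding St_def by simp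
      qed
      show "St P \<subseteq> ?f ` H"
      proof
        fix x assume "x \<in> St P"
        then have x: "x \<in> carrier G" "P #> x = P" unfolding St_def by auto
        have "H #> (y \<otimes> x) = H #> y" using x y coset_mult_assoc Hsub by simp
        then have "y \<otimes> x \<in> H #> y" using rcos_self[of "y \<otimes> x" H] x y HG by simp
        then have h: "(y \<otimes> x) \<otimes> inv y \<in> H" using rcos_module_imp[OF grp y(1)] by simp
        have "?f ((y \<otimes> x) \<otimes> inv y) = x" using x y by (simp add: m_assoc flip: m_assoc[of "inv y" y x])
        then show "x \<in> ?f ` H" using h by force
      qed
    qed
    moreover have "inj_on ?f H"
      by (rule inj_onI) (use y Hsub in \<open>auto\<close>)
    ultimately show ?thesis using card_image cardH by metis
  qed
  have bz_ne: "H #> (b \<otimes> z) \<noteq> H #> z" if "z \<in> carrier G" for z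
  proof
    assume "H #> (b \<otimes> z) = H #> z"
    then have "b \<otimes> z \<in> H #> z" using rcos_self[of "b \<otimes> z" H] that b HG by simp
    then have "(b \<otimes> z) \<otimes> inv z \<in> H" using rcos_module_imp[OF grp that] by simp
    then show False using b that by (simp add: m_assoc)
  qed
  have T: "x = \<one>" if TA: "P \<in> rcosets H" "Q \<in> rcosets H" "P \<noteq> Q" "x \<in> St P" "x \<in> St Q" for P Q x
  proof -
    obtain z where z: "z \<in> carrier G"
      "(H #> z = P \<and> H #> (b \<otimes> z) = Q) \<or> (H #> z = Q \<and> H #> (b \<otimes> z) = P)"
      using SW[OF TA(1-3)] by blast
    have x: "x \<in> carrier G" "P #> x = P" "Q #> x = Q" using TA unfolding St_def by auto
    have e1: "(H #> z) #> x = H #> z" "(H #> (b \<otimes> z)) #> x = H #> (b \<otimes> z)"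
      using z x by auto
    have zx: "z \<otimes> x \<in> carrier G" using z x by simp
    have e2: "H #> z = H #> (z \<otimes> x)" "H #> (b \<otimes> z) = H #> (b \<otimes> (z \<otimes> x))"
      using e1 coset_mult_assoc[OF Hsub] z x b by (simp_all add: m_assoc)
    from INJ[OF z(1) zx e2] show ?thesis
    proof
      assume "z \<otimes> x = z" then show ?thesis using z x
        by (metis l_cancel_one')
    next
      assume "z \<otimes> x = b \<otimes> z"
      then have "H #> z = H #> (b \<otimes> z)" using e2(1) by simp
      then show ?thesis using bz_ne[OF z(1)] by simp
    qed
  qed

  have finO: "finite (rcosets H)" using cardO n6 card_ge_0_finite by auto
  have oneSt: "\<one> \<in> St P" if "P \<in> rcosets H" for P using Psub[OF that] unfolding St_def by simp
  have Stc: "St P \<subseteq> carrier G" for P unfolding St_def by auto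
  define U where "U = (\<Union>P\<in>rcosets H. St P - {\<one>})"
  have cardU: "card U = n * (n - 2)"
  proof -
    have "card U = (\<Sum>P\<in>rcosets H. card (St P - {\<one>}))"
      unfolding U_def
    proof (rule card_UN_disjoint[OF finO])
      show "\<forall>P\<in>rcosets H. finite (St P - {\<one>})" using fin Stc finite_subset by blast
      show "\<forall>P\<in>rcosets H. \<forall>Q\<in>rcosets H. P \<noteq> Q \<longrightarrow> (St P - {\<one>}) \<inter> (St Q - {\<one>}) = {}"
        using T by blast
    qed
    also have "\<dots> = (\<Sum>P\<in>rcosets H. n - 2)"
    proof (rule sum.cong[OF refl])
      fix P assume "P \<in> rcosets H"
      then show "card (St P - {\<one>}) = n - 2" using St_card oneSt fin Stc finite_subset
        by (simp add: card_Diff_singleton_if)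
    qed
    also have "\<dots> = n * (n - 2)" using cardO by simp
    finally show ?thesis .
  qed
  have Uc: "U \<subseteq> carrier G" unfolding U_def using Stc by blast
  have oneU: "\<one> \<notin> U" unfolding U_def by blast
  define F where "F = carrier G - insert \<one> U"
  have finF: "finite F" unfolding F_def using fin by simp
  have cardF: "card F = n - 1"
  proof -
    have "card F = card (carrier G) - card (insert \<one> U)"
      unfolding F_def using fin Uc by (subst card_Diff_subset) (auto intro: finite_subset)
    also have "card (insert \<one> U) = n * (n - 2) + 1" using oneU cardU fin Uc finite_subset by fastforce
    also have "card (carrier G) = n * (n - 1)" using ordG order_def by metis
    finally have cF: "card F = n * (n - 1) - (n * (n - 2) + 1)" .
    have "n - 1 = (n - 2) + 1" using nge by simp
    then have e: "n * (n - 1) = n * (n - 2) + n" by (metis add.right_neutral mult.right_neutral distrib_left)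
    show ?thesis using cF e by linarith
  qed
  have Hin: "H \<in> rcosets H" using subgroup_in_rcosets[OF grp] .
  have oneH: "\<one> \<in> H" by simp
  have invol: "\<exists>t. t \<in> carrier G \<and> t \<otimes> t = \<one> \<and> t \<in> Q" if Q: "Q \<in> rcosets H" "Q \<noteq> H" for Q
  proof -
    obtain z where z: "z \<in> carrier G"
      "(H #> z = H \<and> H #> (b \<otimes> z) = Q) \<or> (H #> z = Q \<and> H #> (b \<otimes> z) = H)"
      using SW[OF Hin Q(1)] Q(2) by blast
    define t where "t = inv z \<otimes> b \<otimes> z"
    have tc: "t \<in> carrier G" unfolding t_def using z b by simp
    have tt: "t \<otimes> t = \<one>" unfolding t_def using z b
      by (simp add: m_assoc cancel1 cancel3)
    have "t \<in> Q" using z(2)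
    proof
      assume A: "H #> z = H \<and> H #> (b \<otimes> z) = Q"
      then have "z \<in> H" using coset_join1 z HG by blast
      then have iz: "inv z \<in> H" by simp
      have ib: "inv b = b" using b inv_equality by blast
      have "t \<otimes> inv (b \<otimes> z) = inv z" unfolding t_def using z b ib
        by (simp add: inv_mult_group m_assoc cancel1 cancel3)
      then have "t \<in> H #> (b \<otimes> z)" using rcos_module_rev[OF grp _ tc] z b iz by simp
      then show ?thesis using A by simp
    next
      assume A: "H #> z = Q \<and> H #> (b \<otimes> z) = H"
      then have "b \<otimes> z \<in> H" using coset_join1 z b HG by blast
      then have iz: "inv (b \<otimes> z) \<in> H" by simp
      have ib: "inv b = b" using b inv_equality by blast
      have "t \<otimes> inv z = inv (b \<otimes> z)" unfolding t_def using z b ib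
        by (simp add: inv_mult_group m_assoc)
      then have "t \<in> H #> z" using rcos_module_rev[OF grp _ tc] z b iz by simp
      then show ?thesis using A by simp
    qed
    then show ?thesis using tc tt by blast
  qed
  define tf where "tf Q = (SOME t. t \<in> carrier G \<and> t \<otimes> t = \<one> \<and> t \<in> Q)" for Q
  have tf: "tf Q \<in> carrier G \<and> tf Q \<otimes> tf Q = \<one> \<and> tf Q \<in> Q" if "Q \<in> rcosets H - {H}" for Q
  proof -
    have "\<exists>t. t \<in> carrier G \<and> t \<otimes> t = \<one> \<and> t \<in> Q" using invol that by blast
    then show ?thesis unfolding tf_def by (rule someI_ex)
  qed
  have disj: "P = Q" if "P \<in> rcosets H" "Q \<in> rcosets H" "x \<in> P" "x \<in> Q" for P Q x
  proof (rule ccontr)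
    assume "P \<noteq> Q"
    then have "disjnt P Q" using rcos_disjoint[OF HG] that(1,2) by (simp add: pairwise_def)
    then show False using that(3,4) by (auto simp: disjnt_def)
  qed
  have inj_tf: "inj_on tf (rcosets H - {H})"
  proof (rule inj_onI)
    fix P Q assume A: "P \<in> rcosets H - {H}" "Q \<in> rcosets H - {H}" "tf P = tf Q"
    have "tf P \<in> P" "tf Q \<in> Q" using tf A(1,2) by blast+
    then show "P = Q" using disj[of P Q "tf P"] A by auto
  qed
  have cardT: "card (tf ` (rcosets H - {H})) = n - 1"
    using card_image[OF inj_tf] cardO finO Hin by simp
  have nodd: "\<not> 2 dvd (n - 1)" using n6 nge by presburger
  have TF: "tf ` (rcosets H - {H}) \<subseteq> F"
  proof
    fix t assume "t \<in> tf ` (rcosets H - {H})"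
    then obtain Q where Q: "Q \<in> rcosets H - {H}" "t = tf Q" by auto
    have t: "t \<in> carrier G" "t \<otimes> t = \<one>" "t \<in> Q" using tf[OF Q(1)] Q(2) by auto
    have t1: "t \<noteq> \<one>"
    proof
      assume "t = \<one>"
      then have "\<one> \<in> Q" using t by simp
      then have "H = Q" using disj[OF Hin _ oneH] Q(1) by blast
      then show False using Q(1) by blast
    qed
    have "t \<notin> U"
    proof
      assume "t \<in> U"
      then obtain P where P: "P \<in> rcosets H" "t \<in> St P" unfolding U_def by auto
      have "{\<one>, t} \<subseteq> St P" using P oneSt by auto
      then have "card {\<one>, t} dvd card (St P)"
        using sub_dvd two_subgroup[OF t(1,2)] St_sub[OF P(1)] by blast
      moreover have "card {\<one>, t} = 2" using t1 by simp
      ultimately have "2 dvd (n - 1)" using St_card[OF P(1)] by simp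
      then show False using nodd by blast
    qed
    then show "t \<in> F" unfolding F_def using t t1 by simp
  qed
  have TeqF: "tf ` (rcosets H - {H}) = F"
    using card_subset_eq[OF finF TF] cardT cardF by simp
  have Finv: "x \<otimes> x = \<one>" if xF: "x \<in> F" for x
  proof -
    obtain Q where "Q \<in> rcosets H - {H}" "x = tf Q" using xF TeqF by blast
    then show ?thesis using tf by blast
  qed
  have "order G = 3 ^ 1 * (order G div 3)" using ordG n6 by auto
  then obtain K where K: "subgroup K G" "card K = 3"
    using sylow_thm[of 3 G 1 "order G div 3"] grp fin by auto
  have KF: "x \<in> F" if "x \<in> K" "x \<noteq> \<one>" for x
  proof -
    have xc: "x \<in> carrier G" using K(1) that subgroup.subset by blast
    have "x \<notin> U"
    proof
      assume "x \<in> U"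
      then obtain P where P: "P \<in> rcosets H" "x \<in> St P" unfolding U_def by auto
      have sI: "subgroup (K \<inter> St P) G" using subgroups_Inter_pair K(1) St_sub[OF P(1)] by blast
      have d1: "card (K \<inter> St P) dvd 3" using sub_dvd[OF sI K(1)] K(2) by auto
      have d2: "card (K \<inter> St P) dvd n - 1" using sub_dvd[OF sI St_sub[OF P(1)]] St_card[OF P(1)] by auto
      have "{\<one>, x} \<subseteq> K \<inter> St P" using that P oneSt subgroup.one_closed[OF K(1)] by auto
      then have "card {\<one>, x} \<le> card (K \<inter> St P)"
      proof (rule card_mono[rotated])
        show "finite (K \<inter> St P)" by (rule finite_subset[OF _ fin]) (use Stc in blast)
      qed
      then have c2: "card (K \<inter> St P) \<ge> 2" using that by simp
      have c3: "card (K \<inter> St P) \<le> 3" using d1 by (simp add: dvd_imp_le)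
      have "card (K \<inter> St P) = 2 \<or> card (K \<inter> St P) = 3" using c2 c3 by linarith
      then have "card (K \<inter> St P) = 3" using d1 by auto
      then have "3 dvd (n - 1)" using d2 by simp
      then show False using n6 nge by presburger
    qed
    then show ?thesis unfolding F_def using xc that by simp
  qed
  obtain x where x: "x \<in> K" "x \<noteq> \<one>"
  proof -
    have "K \<noteq> {\<one>}" using K(2) by auto
    moreover have "\<one> \<in> K" using K(1) subgroup.one_closed by blast
    ultimately show ?thesis using that by blast
  qed
  have xc: "x \<in> carrier G" using K(1) x subgroup.subset by blast
  have "x \<otimes> x = \<one>" using Finv KF x by blast
  then have "card {\<one>, x} dvd card K"
    using sub_dvd[OF two_subgroup[OF xc] K(1)] x subgroup.one_closed[OF K(1)] by auto
  moreover have "card {\<one>, x} = 2" using x by simp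
  ultimately have "(2::nat) dvd 3" using K(2) by simp
  then show False by presburger
qed



lemma IK_adj_simps [simp]:
  "IK_adj (Inl v) (Inr e) = (v \<in> e)" "IK_adj (Inr e) (Inl v) = (v \<in> e)"
  "IK_adj (Inl v) (Inl w) = False" "IK_adj (Inr e) (Inr e') = False"
  by (auto simp: IK_adj_def)

lemma IK_adj_sym: "IK_adj x y = IK_adj y x"
  by (cases x; cases y) auto

lemma IK_tri: "IK_adj x y \<Longrightarrow> IK_adj y z \<Longrightarrow> IK_adj x z \<Longrightarrow> False"
  by (cases x; cases y; cases z) auto

lemma IKV_Inl: "Inl v \<in> IK_vertices n \<longleftrightarrow> v < n"
  by (auto simp: IK_vertices_def)

lemma IKV_Inr: "Inr e \<in> IK_vertices n \<longleftrightarrow> e \<subseteq> {..<n} \<and> card e = 2"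
  by (auto simp: IK_vertices_def)

lemma deg_Inr:
  assumes "Inr e \<in> IK_vertices n"
  shows "card {w \<in> IK_vertices n. IK_adj (Inr e) w} = 2"
proof -
  have e: "e \<subseteq> {..<n}" "card e = 2" using assms IKV_Inr by auto
  have "{w \<in> IK_vertices n. IK_adj (Inr e) w} = Inl ` e"
  proof (rule Set.set_eqI)
    fix w show "w \<in> {w \<in> IK_vertices n. IK_adj (Inr e) w} \<longleftrightarrow> w \<in> Inl ` e"
      using e(1) by (cases w) (auto simp: IKV_Inl IKV_Inr)
  qed
  moreover have "card (Inl ` e) = card e" by (rule card_image) simp
  ultimately show ?thesis using e by simp
qed

lemma deg_Inl:
  assumes "v < n"
  shows "card {w \<in> IK_vertices n. IK_adj (Inl v) w} = n - 1"
proof -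
  let ?h = "\<lambda>w. {v, w}"
  have "{w \<in> IK_vertices n. IK_adj (Inl v) w} = Inr ` (?h ` ({..<n} - {v}))"
  proof (rule Set.set_eqI)
    fix w show "w \<in> {w \<in> IK_vertices n. IK_adj (Inl v) w} \<longleftrightarrow> w \<in> Inr ` (?h ` ({..<n} - {v}))"
    proof (cases w)
      case (Inl a) then show ?thesis by auto
    next
      case (Inr e)
      show ?thesis
      proof
        assume "w \<in> {w \<in> IK_vertices n. IK_adj (Inl v) w}"
        then have e: "e \<subseteq> {..<n}" "card e = 2" "v \<in> e" using Inr IKV_Inr by auto
        then obtain x y where xy: "e = {x, y}" "x \<noteq> y" by (meson card_2_iff)
        then obtain u where "e = {v, u}" "u \<noteq> v" using e(3) by auto
        then show "w \<in> Inr ` (?h ` ({..<n} - {v}))" using Inr e(1) by auto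
      next
        assume "w \<in> Inr ` (?h ` ({..<n} - {v}))"
        then obtain u where "u < n" "u \<noteq> v" "e = {v, u}" using Inr by auto
        then show "w \<in> {w \<in> IK_vertices n. IK_adj (Inl v) w}" using Inr assms
          by (auto simp: IKV_Inr)
      qed
    qed
  qed
  moreover have "card (Inr ` (?h ` ({..<n} - {v}))) = card (?h ` ({..<n} - {v}))"
    by (rule card_image) simp
  moreover have "card (?h ` ({..<n} - {v})) = card ({..<n} - {v})"
    by (rule card_image) (auto simp: inj_on_def doubleton_eq_iff)
  ultimately show ?thesis using assms by simp
qed



lemma (in group) bz_ne':
  assumes "subgroup H G" "b \<notin> H" "b \<in> carrier G" "z \<in> carrier G"
  shows "H #> (b \<otimes> z) \<noteq> H #> z"
proof
  interpret subgroup H G by fact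
  assume "H #> (b \<otimes> z) = H #> z"
  then have "b \<otimes> z \<in> H #> z" using rcos_self[of "b \<otimes> z" H] assms by simp
  then have "(b \<otimes> z) \<otimes> inv z \<in> H" using rcos_module_imp[OF is_group assms(4)] by simp
  then show False using assms by (simp add: m_assoc)
qed

lemma (in group) coset_of_mem:
  assumes "subgroup H G" "P \<in> rcosets H" "x \<in> P"
  shows "P = H #> x"
proof -
  obtain y where y: "y \<in> carrier G" "P = H #> y" using assms(2) by (auto simp: RCOSETS_def)
  have "x \<in> H #> y" using y(2) assms(3) by simp
  then have "H #> y = H #> x" using repr_independence[of x H y] y(1) assms(1) by blast
  then show ?thesis using y(2) by simp
qed

lemma card2_eq: "card e = 2 \<Longrightarrow> a \<in> e \<Longrightarrow> b \<in> e \<Longrightarrow> a \<noteq> b \<Longrightarrow> e = {a, b}"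
  by (auto simp: card_2_iff)

lemma main_lemma:
  fixes G (structure) and n :: nat and S :: "'g list" and f
  assumes grp: "group G" and n6: "6 dvd n" "n > 0"
    and S: "set S \<subseteq> carrier G"
    and bij: "bij_betw f (IK_vertices n) (phi_vertices G S)"
    and ed: "\<forall>u\<in>IK_vertices n. \<forall>v\<in>IK_vertices n. IK_edges u v \<approx> phi_edges (f u) (f v)"
  shows False
proof -
  interpret group G by (rule grp)
  have nge: "n \<ge> 6" using n6 by (auto dest: dvd_imp_le)
  define IKV where "IKV = IK_vertices n"
  define V where "V = phi_vertices G S"
  define g where "g = inv_into IKV f"
  have gb: "bij_betw g V IKV" unfolding g_def V_def IKV_def using bij bij_betw_inv_into by blast
  have gV: "g p \<in> IKV" if "p \<in> V" for p using gb that bij_betwE by blast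
  have fIK: "f u \<in> V" if "u \<in> IKV" for u using bij that bij_betwE unfolding V_def IKV_def by blast
  have fg: "f (g p) = p" if "p \<in> V" for p
    unfolding g_def using bij_betw_inv_into_right[OF bij] that unfolding V_def IKV_def by blast
  have gf: "g (f u) = u" if "u \<in> IKV" for u
    unfolding g_def using bij_betw_inv_into_left[OF bij] that unfolding V_def IKV_def by blast
  have ginj: "p = q" if gq: "p \<in> V" "q \<in> V" "g p = g q" for p q
  proof -
    have "f (g p) = f (g q)" using gq(3) by simp
    then show ?thesis using fg[OF gq(1)] fg[OF gq(2)] by simp
  qed
  have adj_sing: "(phi_edges p q \<noteq> {} \<longleftrightarrow> IK_adj (g p) (g q)) \<and>
      (phi_edges p q \<noteq> {} \<longrightarrow> (\<exists>x. phi_edges p q = {x}))" if "p \<in> V" "q \<in> V" for p q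
  proof -
    have "g p \<in> IK_vertices n" "g q \<in> IK_vertices n" using gV that unfolding IKV_def by auto
    then have "IK_edges (g p) (g q) \<approx> phi_edges (f (g p)) (f (g q))" using ed by blast
    moreover have "f (g p) = p" "f (g q) = q" using fg that by blast+
    ultimately have e: "IK_edges (g p) (g q) \<approx> phi_edges p q" by (simp only:)
    show ?thesis
    proof (cases "IK_adj (g p) (g q)")
      case True
      then have h: "IK_edges (g p) (g q) = {{g p, g q}}" unfolding IK_edges_def by simp
      have "phi_edges p q \<approx> IK_edges (g p) (g q)" by (rule eqpoll_sym[OF e])
      then have "phi_edges p q \<approx> {{g p, g q}}" unfolding h .
      then have "\<exists>u. phi_edges p q = {u}" by (simp only: eqpoll_singleton_iff)
      then show ?thesis using True by auto
    next
      case False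
      then have h: "IK_edges (g p) (g q) = {}" unfolding IK_edges_def by simp
      have "phi_edges p q \<approx> IK_edges (g p) (g q)" by (rule eqpoll_sym[OF e])
      then have "phi_edges p q \<approx> ({} :: (nat + nat set) set set)" unfolding h .
      then show ?thesis using False by simp
    qed
  qed
  have adj: "phi_edges p q \<noteq> {} \<longleftrightarrow> IK_adj (g p) (g q)" if "p \<in> V" "q \<in> V" for p q
    using adj_sing that by blast
  have sing: "\<exists>x. phi_edges p q = {x}" if "p \<in> V" "q \<in> V" "phi_edges p q \<noteq> {}" for p q
    using adj_sing that by blast
  define Hs where "Hs i = generate G {S ! i}" for i
  have Vmem: "(k, C) \<in> V \<longleftrightarrow> k < length S \<and> C \<in> rcosets (Hs k)" for k C
    unfolding V_def phi_vertices_def Hs_def by simp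
  have Hsub: "subgroup (Hs i) G" if "i < length S" for i
  proof -
    have "S ! i \<in> carrier G" using S that nth_mem by blast
    then show ?thesis unfolding Hs_def by (intro generate_is_subgroup) simp
  qed
  have Hv: "(i, Hs i) \<in> V" if "i < length S" for i
    using Vmem Hsub[OF that] subgroup.subgroup_in_rcosets[OF _ grp] that by blast
  have one_Hs: "\<one> \<in> Hs i" if "i < length S" for i using Hsub[OF that] subgroup.one_closed by blast
  have pe: "phi_edges (i, C) (j, D) = (if i \<noteq> j then C \<inter> D else {})" for i j C D
    unfolding phi_edges_def by simp
  have IK1: "Inl 0 \<in> IKV" "Inr {0, 1} \<in> IKV" unfolding IKV_def using nge by (auto simp: IKV_Inl IKV_Inr)
  have len2: "length S \<ge> 2"
  proof (rule ccontr)
    assume "\<not> length S \<ge> 2"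
    then have l: "length S \<le> 1" by simp
    define p where "p = f (Inl 0)"
    define q where "q = f (Inr {0,1})"
    have pq: "p \<in> V" "q \<in> V" using fIK IK1 unfolding p_def q_def by auto
    have "IK_adj (g p) (g q)" unfolding p_def q_def using gf IK1 by simp
    then have "phi_edges p q \<noteq> {}" using adj pq by blast
    moreover have "fst p = 0" "fst q = 0" using pq l unfolding V_def phi_vertices_def by auto
    ultimately show False unfolding phi_edges_def by simp
  qed
  have len2': "length S \<le> 2"
  proof (rule ccontr)
    assume "\<not> length S \<le> 2"
    then have l: "length S > 2" by simp
    have a: "IK_adj (g (i, Hs i)) (g (j, Hs j))" if "i < 3" "j < 3" "i \<noteq> j" for i j
    proof -
      have "\<one> \<in> Hs i \<inter> Hs j" using one_Hs that l by auto
      then have "phi_edges (i, Hs i) (j, Hs j) \<noteq> {}" using pe[of i "Hs i" j "Hs j"] that(3) by auto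
      moreover have "(i, Hs i) \<in> V" "(j, Hs j) \<in> V" using Hv that l by auto
      ultimately show ?thesis using adj by blast
    qed
    show False using IK_tri[OF a[of 0 1] a[of 1 2] a[of 0 2]] by simp
  qed
  have lenS: "length S = 2" using len2 len2' by simp

  have Hsub2: "subgroup (Hs i) G" if "i < 2" for i using Hsub lenS that by simp
  have Csub: "C \<subseteq> carrier G" if "k < 2" "C \<in> rcosets (Hs k)" for k C
    using subgroup.rcosets_carrier[OF Hsub2[OF that(1)] grp that(2)] .
  have degV: "card {q \<in> V. phi_edges (k, C) q \<noteq> {}} = card (Hs k)"
    if k: "k < 2" "C \<in> rcosets (Hs k)" for k C
  proof -
    define l where "l = 1 - k"
    have l: "l < 2" "l \<noteq> k" unfolding l_def using k(1) by presburger+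
    have kC: "(k, C) \<in> V" using Vmem k lenS by simp
    have kl: "k \<noteq> l" using l by simp
    let ?phi = "\<lambda>x. (l, Hs l #> x)"
    have "bij_betw ?phi C {q \<in> V. phi_edges (k, C) q \<noteq> {}}"
    proof (rule bij_betw_imageI)
      show "inj_on ?phi C"
      proof (rule inj_onI)
        fix x y assume xy: "x \<in> C" "y \<in> C" "?phi x = ?phi y"
        have xc: "x \<in> carrier G" "y \<in> carrier G" using xy Csub[OF k] by auto
        have xv: "?phi x \<in> V" using Vmem lenS l rcosetsI[OF subgroup.subset[OF Hsub2[OF l(1)]] xc(1)] by simp
        have "x \<in> Hs l #> x" "y \<in> Hs l #> x"
          using rcos_self[OF xc(1) Hsub2[OF l(1)]] rcos_self[OF xc(2) Hsub2[OF l(1)]] xy(3) by auto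
        then have "x \<in> phi_edges (k, C) (?phi x)" "y \<in> phi_edges (k, C) (?phi x)"
          using xy kl by (auto simp: pe)
        moreover then have "phi_edges (k, C) (?phi x) \<noteq> {}" by blast
        then obtain z where "phi_edges (k, C) (?phi x) = {z}" using sing[OF kC xv] by blast
        ultimately show "x = y" by simp
      qed
      show "?phi ` C = {q \<in> V. phi_edges (k, C) q \<noteq> {}}"
      proof (rule Set.set_eqI)
        fix q show "q \<in> ?phi ` C \<longleftrightarrow> q \<in> {q \<in> V. phi_edges (k, C) q \<noteq> {}}"
        proof
          assume "q \<in> ?phi ` C"
          then obtain x where x: "x \<in> C" "q = ?phi x" by auto
          have xc: "x \<in> carrier G" using x Csub[OF k] by auto
          have xv: "?phi x \<in> V" using Vmem lenS l rcosetsI[OF subgroup.subset[OF Hsub2[OF l(1)]] xc] by simp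
          have "x \<in> Hs l #> x" using rcos_self[OF xc Hsub2[OF l(1)]] .
          then have "x \<in> phi_edges (k, C) (?phi x)" using x kl by (auto simp: pe)
          then show "q \<in> {q \<in> V. phi_edges (k, C) q \<noteq> {}}" using x xv by auto
        next
          assume "q \<in> {q \<in> V. phi_edges (k, C) q \<noteq> {}}"
          then obtain k' D where q: "q = (k', D)" "(k', D) \<in> V" "phi_edges (k, C) (k', D) \<noteq> {}"
            by (cases q) auto
          have k': "k' \<noteq> k" "k' < 2" using q lenS Vmem by (auto simp: pe split: if_splits)
          then have "k' = l" unfolding l_def using k by auto
          moreover obtain x where x: "x \<in> C" "x \<in> D" using q k' by (auto simp: pe split: if_splits)
          moreover have "D \<in> rcosets (Hs k')" using q Vmem by simp
          ultimately have "D = Hs l #> x" using coset_of_mem Hsub2 l by blast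
          then show "q \<in> ?phi ` C" using q x \<open>k' = l\<close> by auto
        qed
      qed
    qed
    then have "card C = card {q \<in> V. phi_edges (k, C) q \<noteq> {}}" by (rule bij_betw_same_card)
    then show ?thesis using card_rcosets_equal[OF k(2) subgroup.subset[OF Hsub2[OF k(1)]]] by simp
  qed
  define degIK where "degIK u = card {w \<in> IKV. IK_adj u w}" for u
  have degT: "card {q \<in> V. phi_edges p q \<noteq> {}} = degIK (g p)" if p: "p \<in> V" for p
  proof -
    have im: "g ` {q \<in> V. phi_edges p q \<noteq> {}} = {w \<in> IKV. IK_adj (g p) w}"
    proof (rule Set.set_eqI)
      fix w show "w \<in> g ` {q \<in> V. phi_edges p q \<noteq> {}} \<longleftrightarrow> w \<in> {w \<in> IKV. IK_adj (g p) w}"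
      proof
        assume "w \<in> g ` {q \<in> V. phi_edges p q \<noteq> {}}"
        then obtain q where q: "q \<in> V" "phi_edges p q \<noteq> {}" "w = g q" by blast
        then show "w \<in> {w \<in> IKV. IK_adj (g p) w}" using adj[OF p q(1)] gV[OF q(1)] by blast
      next
        assume w: "w \<in> {w \<in> IKV. IK_adj (g p) w}"
        then have "f w \<in> V" "g (f w) = w" using fIK gf by auto
        moreover have "phi_edges p (f w) \<noteq> {}" using adj[OF p \<open>f w \<in> V\<close>] w \<open>g (f w) = w\<close> by simp
        ultimately show "w \<in> g ` {q \<in> V. phi_edges p q \<noteq> {}}" by force
      qed
    qed
    have inj: "inj_on g {q \<in> V. phi_edges p q \<noteq> {}}"
    proof (rule inj_onI)
      fix x y assume "x \<in> {q \<in> V. phi_edges p q \<noteq> {}}" "y \<in> {q \<in> V. phi_edges p q \<noteq> {}}" "g x = g y"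
      then show "x = y" using ginj[of x y] by blast
    qed
    show ?thesis unfolding degIK_def using card_image[OF inj] im by simp
  qed
  have degIKl: "degIK (Inl a) = n - 1" if "Inl a \<in> IKV" for a
    unfolding degIK_def IKV_def using deg_Inl that by (simp add: IKV_def IKV_Inl)
  have degIKr: "degIK (Inr e) = 2" if "Inr e \<in> IKV" for e
    unfolding degIK_def IKV_def using deg_Inr that by (simp add: IKV_def)
  have degG: "degIK (g (k, C)) = card (Hs k)" if "k < 2" "C \<in> rcosets (Hs k)" for k C
  proof -
    have "(k, C) \<in> V" using Vmem that lenS by simp
    then show ?thesis using degV[OF that] degT by simp
  qed
  have mainc: False if ij: "i < 2" "j < 2" "i \<noteq> j" and gi: "g (i, Hs i) \<in> range Inl"
      and aij: "IK_adj (g (i, Hs i)) (g (j, Hs j))" for i j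
  proof -
    define Hi where "Hi = Hs i"
    define Hj where "Hj = Hs j"
    have HiG: "subgroup Hi G" "subgroup Hj G" unfolding Hi_def Hj_def using Hsub2 ij by auto
    have iv: "(i, Hi) \<in> V" "(j, Hj) \<in> V" unfolding Hi_def Hj_def using Hv ij lenS by auto
    obtain a where a: "g (i, Hi) = Inl a" using gi unfolding Hi_def by auto
    have aIK: "Inl a \<in> IKV" using gV[OF iv(1)] a by simp
    obtain e where e: "g (j, Hj) = Inr e" using aij a unfolding Hi_def Hj_def
      by (cases "g (j, Hs j)") auto
    have eIK: "Inr e \<in> IKV" using gV[OF iv(2)] e by simp
    have cHi: "card Hi = n - 1" using degG[of i Hi] ij a degIKl[OF aIK] iv Vmem unfolding Hi_def by auto
    have cHj: "card Hj = 2" using degG[of j Hj] ij e degIKr[OF eIK] iv Vmem unfolding Hj_def by auto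
    have sideI: "\<exists>a. g (i, C) = Inl a \<and> a < n" if "C \<in> rcosets Hi" for C
    proof -
      have cv: "(i, C) \<in> V" using Vmem that ij lenS Hi_def by simp
      have dg: "degIK (g (i, C)) = n - 1" using degG[of i C] ij that cHi Hi_def by simp
      show ?thesis
      proof (cases "g (i, C)")
        case (Inl x)
        then have "Inl x \<in> IK_vertices n" using gV[OF cv] unfolding IKV_def by simp
        then have "x < n" by (simp add: IKV_Inl)
        then show ?thesis using Inl by blast
      next
        case (Inr x)
        then have "Inr x \<in> IKV" using gV[OF cv] by simp
        then have d: "degIK (Inr x) = 2" using degIKr by blast
        have "degIK (Inr x) = n - 1" using dg by (simp only: Inr)
        then have "n - 1 = 2" using d by linarith
        then show ?thesis using nge by linarith
      qed
    qed
    have sideJ: "\<exists>e. g (j, D) = Inr e \<and> e \<subseteq> {..<n} \<and> card e = 2" if "D \<in> rcosets Hj" for D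
    proof -
      have cv: "(j, D) \<in> V" using Vmem that ij lenS Hj_def by simp
      have dg: "degIK (g (j, D)) = 2" using degG[of j D] ij that cHj Hj_def by simp
      show ?thesis
      proof (cases "g (j, D)")
        case (Inr x)
        then have "Inr x \<in> IK_vertices n" using gV[OF cv] unfolding IKV_def by simp
        then have "x \<subseteq> {..<n}" "card x = 2" by (simp_all add: IKV_Inr)
        then show ?thesis using Inr by blast
      next
        case (Inl x)
        then have "Inl x \<in> IKV" using gV[OF cv] by simp
        then have d: "degIK (Inl x) = n - 1" using degIKl by blast
        have "degIK (Inl x) = 2" using dg by (simp only: Inl)
        then have "n - 1 = 2" using d by linarith
        then show ?thesis using nge by linarith
      qed
    qed
    obtain b where b: "Hj = {\<one>, b}" "b \<noteq> \<one>"
    proof -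
      obtain x y where xy: "Hj = {x, y}" "x \<noteq> y" using card_2_iff[THEN iffD1, OF cHj] by blast
      have "\<one> \<in> Hj" using subgroup.one_closed[OF HiG(2)] .
      then have "x = \<one> \<or> y = \<one>" using xy(1) by auto
      then show ?thesis
      proof
        assume "x = \<one>" then show ?thesis using that[of y] xy by simp
      next
        assume "y = \<one>" then show ?thesis using that[of x] xy by (simp add: insert_commute)
      qed
    qed
    have bHj: "b \<in> Hj" using b(1) by simp
    have bc: "b \<in> carrier G" using bHj subgroup.subset[OF HiG(2)] by blast
    have bb: "b \<otimes> b = \<one>"
    proof -
      have "b \<otimes> b \<in> Hj" using subgroup.m_closed[OF HiG(2) bHj bHj] .
      moreover have "b \<otimes> b \<noteq> b"
      proof
        assume "b \<otimes> b = b"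
        then have "b \<otimes> b = b \<otimes> \<one>" using bc by simp
        then show False using b(2) bc l_cancel[of b b \<one>] by simp
      qed
      ultimately show ?thesis using b(1) by simp
    qed
    have cosj: "Hj #> z = {z, b \<otimes> z}" if "z \<in> carrier G" for z
      unfolding r_coset_def b(1) using that by auto
    have bHi: "b \<notin> Hi"
    proof
      assume bi: "b \<in> Hi"
      have "phi_edges (i, Hi) (j, Hj) = Hi \<inter> Hj" using pe[of i Hi j Hj] ij(3) by simp
      moreover have o1: "\<one> \<in> Hi \<inter> Hj" using subgroup.one_closed[OF HiG(1)] subgroup.one_closed[OF HiG(2)] by blast
      moreover have o2: "b \<in> Hi \<inter> Hj" using bi bHj by blast
      ultimately have "phi_edges (i, Hi) (j, Hj) \<noteq> {}" by blast
      then obtain x where "phi_edges (i, Hi) (j, Hj) = {x}" using sing[OF iv] by blast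
      then have "Hi \<inter> Hj = {x}" using \<open>phi_edges (i, Hi) (j, Hj) = Hi \<inter> Hj\<close> by simp
      then show False using o1 o2 b(2) by (metis singletonD)
    qed
    have finO: "card (rcosets Hi) = n"
    proof -
      have "bij_betw (\<lambda>C. g (i, C)) (rcosets Hi) (Inl ` {..<n})"
      proof (rule bij_betw_imageI)
        show "inj_on (\<lambda>C. g (i, C)) (rcosets Hi)"
        proof (rule inj_onI)
          fix C C' assume CC: "C \<in> rcosets Hi" "C' \<in> rcosets Hi" "g (i, C) = g (i, C')"
          have "(i, C) \<in> V" "(i, C') \<in> V" using Vmem ij lenS CC(1,2) unfolding Hi_def by auto
          then have "(i, C) = (i, C')" using ginj CC(3) by blast
          then show "C = C'" by simp
        qed
        show "(\<lambda>C. g (i, C)) ` (rcosets Hi) = Inl ` {..<n}"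
        proof (rule Set.set_eqI)
          fix w show "w \<in> (\<lambda>C. g (i, C)) ` (rcosets Hi) \<longleftrightarrow> w \<in> Inl ` {..<n}"
          proof
            assume "w \<in> (\<lambda>C. g (i, C)) ` (rcosets Hi)"
            then obtain C where "C \<in> rcosets Hi" "w = g (i, C)" by blast
            then show "w \<in> Inl ` {..<n}" using sideI by blast
          next
            assume "w \<in> Inl ` {..<n}"
            then obtain x where x: "x < n" "w = Inl x" by auto
            then have wI: "w \<in> IKV" unfolding IKV_def by (simp add: IKV_Inl)
            obtain k C where kC: "f w = (k, C)" by (cases "f w")
            have kv: "(k, C) \<in> V" using fIK[OF wI] kC by simp
            have gk: "g (k, C) = w" using gf[OF wI] kC by simp
            have "k \<noteq> j"
            proof
              assume "k = j"
              then have "C \<in> rcosets Hj" using kv Vmem unfolding Hj_def by simp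
              then obtain e where "g (j, C) = Inr e" using sideJ by blast
              then show False using gk x \<open>k = j\<close> by simp
            qed
            moreover have "k < 2" using kv Vmem lenS by simp
            ultimately have "k = i" using ij by linarith
            then have "C \<in> rcosets Hi" using kv Vmem unfolding Hi_def by simp
            then show "w \<in> (\<lambda>C. g (i, C)) ` (rcosets Hi)" using gk \<open>k = i\<close> by blast
          qed
        qed
      qed
      then have "card (rcosets Hi) = card (Inl ` {..<n} :: (nat + nat set) set)" by (rule bij_betw_same_card)
      also have "\<dots> = n" by (simp add: card_image)
      finally show ?thesis .
    qed
    have finG: "finite (carrier G)"
    proof -
      have f1: "finite (rcosets Hi)" using finO nge card_ge_0_finite[of "rcosets Hi"] by simp
      have f2: "finite C" if C: "C \<in> rcosets Hi" for C
      proof -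
        have "card C = n - 1" using card_rcosets_equal[OF C subgroup.subset[OF HiG(1)]] cHi by simp
        then show ?thesis using nge card_ge_0_finite[of C] by simp
      qed
      have "finite (\<Union>(rcosets Hi))" using finite_Union[OF f1] f2 by blast
      then show ?thesis using rcosets_part_G[OF HiG(1)] by simp
    qed
    have ijn: "j \<noteq> i" using ij(3) by simp
    have adjI: "IK_adj (g (i, XX)) (g (j, YY))"
      if XXYY: "XX \<in> rcosets Hi" "YY \<in> rcosets Hj" "x \<in> XX" "x \<in> YY" for XX YY x
    proof -
      have v: "(i, XX) \<in> V" "(j, YY) \<in> V" using Vmem ij lenS XXYY(1,2) unfolding Hi_def Hj_def by auto
      have "phi_edges (i, XX) (j, YY) = XX \<inter> YY" using pe[of i XX j YY] ij(3) by simp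
      then have "phi_edges (i, XX) (j, YY) \<noteq> {}" using XXYY(3,4) by blast
      then show ?thesis using adj[OF v] by blast
    qed
    have SW: "\<exists>z\<in>carrier G. (Hi #> z = P \<and> Hi #> (b \<otimes> z) = Q) \<or> (Hi #> z = Q \<and> Hi #> (b \<otimes> z) = P)"
      if PQ: "P \<in> rcosets Hi" "Q \<in> rcosets Hi" "P \<noteq> Q" for P Q
    proof -
      obtain x where x: "g (i, P) = Inl x" "x < n" using sideI PQ(1) by blast
      obtain y where y: "g (i, Q) = Inl y" "y < n" using sideI PQ(2) by blast
      have pv: "(i, P) \<in> V" "(i, Q) \<in> V" using Vmem ij lenS PQ(1,2) unfolding Hi_def by auto
      have xy: "x \<noteq> y"
      proof
        assume "x = y"
        then have "g (i, P) = g (i, Q)" using x y by simp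
        then have "(i, P) = (i, Q)" using ginj[OF pv] by blast
        then show False using PQ(3) by simp
      qed
      define w :: "nat + nat set" where "w = Inr {x, y}"
      have wI: "w \<in> IKV" unfolding w_def IKV_def using x y xy by (simp add: IKV_Inr)
      obtain k D where kD: "f w = (k, D)" by (cases "f w")
      have kv: "(k, D) \<in> V" using fIK[OF wI] kD by simp
      have gk: "g (k, D) = w" using gf[OF wI] kD by simp
      have "IK_adj (g (i, P)) (g (k, D))" using gk x unfolding w_def by simp
      then have a1: "phi_edges (i, P) (k, D) \<noteq> {}" using adj[OF pv(1) kv] by blast
      have "IK_adj (g (i, Q)) (g (k, D))" using gk y unfolding w_def by simp
      then have a2: "phi_edges (i, Q) (k, D) \<noteq> {}" using adj[OF pv(2) kv] by blast
      have ki: "k \<noteq> i" using a1 by (auto simp: pe)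
      moreover have "k < 2" using kv Vmem lenS by simp
      ultimately have kj: "k = j" using ij by linarith
      then have Dr: "D \<in> rcosets Hj" using kv Vmem unfolding Hj_def by simp
      then obtain z where z: "z \<in> carrier G" "D = Hj #> z" by (auto simp: RCOSETS_def)
      have Dz: "D = {z, b \<otimes> z}" using z cosj by simp
      obtain u where u: "u \<in> P" "u \<in> D" using a1 ki by (auto simp: pe)
      obtain v where v: "v \<in> Q" "v \<in> D" using a2 ki by (auto simp: pe)
      have Pu: "P = Hi #> u" using coset_of_mem[OF HiG(1) PQ(1) u(1)] .
      have Qv: "Q = Hi #> v" using coset_of_mem[OF HiG(1) PQ(2) v(1)] .
      have uv: "u = z \<or> u = b \<otimes> z" "v = z \<or> v = b \<otimes> z" using u(2) v(2) Dz by auto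
      have "u \<noteq> v" using Pu Qv PQ(3) by blast
      then have "(u = z \<and> v = b \<otimes> z) \<or> (v = z \<and> u = b \<otimes> z)" using uv by blast
      then show ?thesis using Pu Qv z(1) by blast
    qed
    have INJ: "w = z \<or> w = b \<otimes> z" if zw: "z \<in> carrier G" "w \<in> carrier G" "Hi #> z = Hi #> w"
      "Hi #> (b \<otimes> z) = Hi #> (b \<otimes> w)" for z w
    proof -
      have bz: "b \<otimes> z \<in> carrier G" "b \<otimes> w \<in> carrier G" using bc zw(1,2) by simp_all
      have HiS: "Hi \<subseteq> carrier G" "Hj \<subseteq> carrier G" using subgroup.subset HiG by blast+
      have rc: "Hi #> z \<in> rcosets Hi" "Hi #> (b \<otimes> z) \<in> rcosets Hi" "Hj #> z \<in> rcosets Hj" "Hj #> w \<in> rcosets Hj"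
        using rcosetsI[OF HiS(1) zw(1)] rcosetsI[OF HiS(1) bz(1)] rcosetsI[OF HiS(2) zw(1)]
          rcosetsI[OF HiS(2) zw(2)] by auto
      have v1: "(i, Hi #> z) \<in> V" "(i, Hi #> (b \<otimes> z)) \<in> V" "(j, Hj #> z) \<in> V" "(j, Hj #> w) \<in> V"
        using Vmem rc ij lenS unfolding Hi_def Hj_def by auto
      have m1: "z \<in> Hi #> z" "b \<otimes> z \<in> Hi #> (b \<otimes> z)" "w \<in> Hi #> z" "b \<otimes> w \<in> Hi #> (b \<otimes> z)"
        using rcos_self[OF zw(1) HiG(1)] rcos_self[OF bz(1) HiG(1)] rcos_self[OF zw(2) HiG(1)]
          rcos_self[OF bz(2) HiG(1)] zw(3,4) by auto
      have m2: "z \<in> Hj #> z" "b \<otimes> z \<in> Hj #> z" "w \<in> Hj #> w" "b \<otimes> w \<in> Hj #> w"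
        using cosj[OF zw(1)] cosj[OF zw(2)] by auto
      have ad: "IK_adj (g (i, Hi #> z)) (g (j, Hj #> z))" "IK_adj (g (i, Hi #> (b \<otimes> z))) (g (j, Hj #> z))"
        "IK_adj (g (i, Hi #> z)) (g (j, Hj #> w))" "IK_adj (g (i, Hi #> (b \<otimes> z))) (g (j, Hj #> w))"
        using adjI[OF rc(1) rc(3) m1(1) m2(1)] adjI[OF rc(2) rc(3) m1(2) m2(2)]
          adjI[OF rc(1) rc(4) m1(3) m2(3)] adjI[OF rc(2) rc(4) m1(4) m2(4)] by auto
      obtain a1 where a1: "g (i, Hi #> z) = Inl a1" using sideI[OF rc(1)] by blast
      obtain a2 where a2: "g (i, Hi #> (b \<otimes> z)) = Inl a2" using sideI[OF rc(2)] by blast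
      obtain e1 where e1: "g (j, Hj #> z) = Inr e1" "e1 \<subseteq> {..<n}" "card e1 = 2" using sideJ[OF rc(3)] by blast
      obtain e2 where e2: "g (j, Hj #> w) = Inr e2" "e2 \<subseteq> {..<n}" "card e2 = 2" using sideJ[OF rc(4)] by blast
      have a12: "a1 \<noteq> a2"
      proof
        assume "a1 = a2"
        then have "g (i, Hi #> z) = g (i, Hi #> (b \<otimes> z))" using a1 a2 by simp
        then have "(i, Hi #> z) = (i, Hi #> (b \<otimes> z))" using ginj[OF v1(1) v1(2)] by blast
        then show False using bz_ne'[OF HiG(1) bHi bc zw(1)] by simp
      qed
      have "IK_adj (Inl a1) (Inr e1)" using ad(1) unfolding a1 e1(1) .
      then have i1: "a1 \<in> e1" by simp
      have "IK_adj (Inl a2) (Inr e1)" using ad(2) unfolding a2 e1(1) .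
      then have i2: "a2 \<in> e1" by simp
      have "IK_adj (Inl a1) (Inr e2)" using ad(3) unfolding a1 e2(1) .
      then have i3: "a1 \<in> e2" by simp
      have "IK_adj (Inl a2) (Inr e2)" using ad(4) unfolding a2 e2(1) .
      then have i4: "a2 \<in> e2" by simp
      have "e1 = {a1, a2}" using card2_eq[OF e1(3) i1 i2 a12] .
      moreover have "e2 = {a1, a2}" using card2_eq[OF e2(3) i3 i4 a12] .
      ultimately have "g (j, Hj #> z) = g (j, Hj #> w)" using e1(1) e2(1) by simp
      then have "(j, Hj #> z) = (j, Hj #> w)" using ginj[OF v1(3) v1(4)] by blast
      then have "Hj #> z = Hj #> w" by simp
      then have "w \<in> Hj #> z" using m2(3) by simp
      then have "w \<in> {z, b \<otimes> z}" using cosj[OF zw(1)] by simp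
      then show ?thesis by simp
    qed
    show False
      using core[OF grp HiG(1) bc b(2) bb bHi finO _ finG n6 SW INJ] cHi by blast
  qed
  have "\<one> \<in> Hs 0 \<inter> Hs 1" using one_Hs lenS by auto
  then have "phi_edges (0, Hs 0) (1, Hs 1) \<noteq> {}" by (auto simp: pe)
  moreover have "(0, Hs 0) \<in> V" "(1, Hs 1) \<in> V" using Hv lenS by auto
  ultimately have "IK_adj (g (0, Hs 0)) (g (1, Hs 1))" using adj by blast
  then show False
  proof (cases "g (0, Hs 0)")
    case (Inl a)
    then show ?thesis using mainc[of 0 1] \<open>IK_adj _ _\<close> by auto
  next
    case (Inr e)
    then have "g (1, Hs 1) \<in> range Inl" using \<open>IK_adj _ _\<close> by (cases "g (1, Hs 1)") auto
    then show ?thesis using mainc[of 1 0] \<open>IK_adj _ _\<close> IK_adj_sym by auto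
  qed
qed


theorem corollary4:
  fixes n :: nat and G :: "('g, 'm) monoid_scheme"
  assumes "6 dvd n" and "n > 0" and "group G"
  shows "\<not> is_G_graph (IK_vertices n) IK_edges G"
proof
  assume "is_G_graph (IK_vertices n) IK_edges G"
  then obtain S where S: "set S \<subseteq> carrier G"
    and iso: "multigraph_iso (IK_vertices n) IK_edges (phi_vertices G S) phi_edges"
    unfolding is_G_graph_def by blast
  then obtain f where bij: "bij_betw f (IK_vertices n) (phi_vertices G S)"
    and ed: "\<forall>u\<in>IK_vertices n. \<forall>v\<in>IK_vertices n. IK_edges u v \<approx> phi_edges (f u) (f v)"
    unfolding multigraph_iso_def by blast
  show False using main_lemma[OF assms(3) assms(1) assms(2) S bij ed] .
qed

end
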